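(* For every $C>0$ there is a constant $c>0$ such that for all integers $n\ge1$ and $m$ with $n-|m|$ even and non-negative and $|m|\le C\sqrt n$, and for all integers $k\ge1$, \[ \max_{0\le r\le1}\bigl|(R_n^{|m|})^{(k)}(r)\bigr|\;\ge\;\frac{c}{\sqrt n}\cdot\frac{n^2(n^2-1^2)\cdots(n^2-(k-1)^2)}{2^k\,(1/2)_k}, \] where $R_n^{|m|}(r)=r^{|m|}\,P^{(0,|m|)}_{\frac{n-|m|}{2}}(2r^2-1)$ for $0\le r\le1$. That is, the upper bound $\max_{0\le r\le1}|(R_n^{|m|})^{(k)}(r)|\le \frac{n^2(n^2-1^2)\cdots(n^2-(k-1)^2)}{2^k(1/2)_k}$ is attained within a factor $O(1/\sqrt n)$ when $|m|=O(\sqrt n)$.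
   Context: $P_p^{(\alpha,\beta)}$ denotes the Jacobi polynomial of degree $p$ orthogonal with respect to the weight $(1-x)^\alpha(1+x)^\beta$ on $[-1,1]$, with standard normalization $P_p^{(\alpha,\beta)}(1)=\binom{p+\alpha}{p}$. $f^{(k)}$ denotes the $k$-th derivative; $(\alpha)_k=\alpha(\alpha+1)\cdots(\alpha+k-1)$ is the Pochhammer symbol. *)

theory Defs
  imports "HOL-Analysis.Analysis"
begin

text \<open>Jacobi polynomial P_p^(a,b)(x), standard normalization P_p^(a,b)(1) = binom(p+a, p),
  given by the explicit classical formula.\<close>
definition jacobiP :: "nat \<Rightarrow> real \<Rightarrow> real \<Rightarrow> real \<Rightarrow> real" where
  "jacobiP p a b x =
     (\<Sum>s=0..p. ((real p + a) gchoose (p - s)) * ((real p + b) gchoose s)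
                 * ((x - 1) / 2) ^ s * ((x + 1) / 2) ^ (p - s))"

definition zernikeR :: "nat \<Rightarrow> nat \<Rightarrow> real \<Rightarrow> real" where
  "zernikeR n m r = r ^ m * jacobiP ((n - m) div 2) 0 (real m) (2 * r\<^sup>2 - 1)"

end

theory Submission
  imports Defs "HOL-Computational_Algebra.Polynomial"
begin

definition nonnegp :: "real poly \<Rightarrow> bool" where
  "nonnegp p \<longleftrightarrow> (\<forall>i. 0 \<le> coeff p i)"

lemma nonnegp_mult: "nonnegp p \<Longrightarrow> nonnegp q \<Longrightarrow> nonnegp (p * q)"
  unfolding nonnegp_def coeff_mult by (auto intro!: sum_nonneg)

lemma nonnegp_power: "nonnegp p \<Longrightarrow> nonnegp (p ^ k)"
  by (induction k) (auto simp: nonnegp_mult, auto simp: nonnegp_def coeff_1)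

lemma nonnegp_add: "nonnegp p \<Longrightarrow> nonnegp q \<Longrightarrow> nonnegp (p + q)"
  unfolding nonnegp_def by auto

lemma nonnegp_pCons: "0 \<le> a \<Longrightarrow> nonnegp p \<Longrightarrow> nonnegp (pCons a p)"
  unfolding nonnegp_def by (auto simp: coeff_pCons split: nat.splits)

lemma nonnegp_0: "nonnegp 0" unfolding nonnegp_def by auto

lemma deriv_poly_fun: "deriv (poly P) = poly (pderiv P)"
  by (rule ext, rule DERIV_imp_deriv, rule poly_DERIV)

lemma higher_deriv_poly: "(deriv ^^ k) (poly P) = poly ((pderiv ^^ k) P)"
  by (induction k) (auto simp: deriv_poly_fun)

lemma higher_pderiv_pcompose_shift:
  "(pderiv ^^ k) (pcompose P [:a, 1:]) = pcompose ((pderiv ^^ k) P) [:a, 1:]"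
  by (induction k) (auto simp: pderiv_pcompose pderiv_pCons)

lemma taylor_at:
  fixes P :: "real poly"
  shows "(deriv ^^ k) (\<lambda>r. poly P (r - 1)) 1 = fact k * coeff P k"
proof -
  have "(\<lambda>r. poly P (r - 1)) = poly (pcompose P [:-1, 1:])"
    by (auto simp: poly_pcompose)
  hence "(deriv ^^ k) (\<lambda>r. poly P (r - 1)) 1 = poly ((pderiv ^^ k) P) 0"
    by (simp add: higher_deriv_poly higher_pderiv_pcompose_shift poly_pcompose)
  also have "\<dots> = fact k * coeff P k"
    by (simp add: poly_0_coeff_0 coeff_higher_pderiv pochhammer_fact)
  finally show ?thesis .
qed

definition uP :: "real poly" where "uP = [:0, 2, 1:]"
definition vP :: "real poly" where "vP = [:1, 1:]"

fun cheb :: "nat \<Rightarrow> real poly \<times> real poly" where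
  "cheb 0 = (1, 0)"
| "cheb (Suc n) = (vP * fst (cheb n) + uP * snd (cheb n), fst (cheb n) + vP * snd (cheb n))"

lemma pderiv_uP: "pderiv uP = 2 * vP"
  by (simp add: uP_def vP_def pderiv_pCons poly_eq_iff coeff_pCons numeral_poly split: nat.split)
lemma pderiv_vP: "pderiv vP = 1"
  by (simp add: vP_def pderiv_pCons)

lemma cheb_deriv:
  "pderiv (fst (cheb n)) = of_nat n * snd (cheb n) \<and>
   uP * pderiv (snd (cheb n)) = of_nat n * fst (cheb n) - vP * snd (cheb n)"
proof (induction n)
  case 0 then show ?case by simp
next
  case (Suc n)
  obtain p q where pq: "cheb n = (p, q)" by (cases "cheb n")
  from Suc pq have h1: "pderiv p = of_nat n * q" and h2: "uP * pderiv q = of_nat n * p - vP * q" by auto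
  have "pderiv (vP * p + uP * q) = vP * pderiv p + p + uP * pderiv q + 2 * vP * q"
    by (simp add: pderiv_add pderiv_mult pderiv_uP pderiv_vP algebra_simps)
  also have "\<dots> = of_nat (Suc n) * (p + vP * q)"
    by (simp only: h1 h2) (simp add: algebra_simps of_nat_Suc)
  finally have "pderiv (vP * p + uP * q) = of_nat (Suc n) * (p + vP * q)" .
  moreover have "uP * pderiv (p + vP * q) = of_nat (Suc n) * (vP * p + uP * q) - vP * (p + vP * q)"
  proof -
    have "uP * pderiv (p + vP * q) = uP * pderiv p + uP * q + vP * (uP * pderiv q)"
      by (simp add: pderiv_add pderiv_mult pderiv_vP algebra_simps)
    also have "\<dots> = of_nat (Suc n) * (vP * p + uP * q) - vP * (p + vP * q)"
      by (simp add: h1 h2 algebra_simps of_nat_Suc)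
    finally show ?thesis .
  qed
  ultimately show ?case by (simp add: pq)
qed

lemma coeff_uP_mult:
  "coeff (uP * X) 0 = 0"
  "coeff (uP * X) (Suc 0) = 2 * coeff X 0"
  "coeff (uP * X) (Suc (Suc k)) = 2 * coeff X (Suc k) + coeff X k"
  by (simp_all add: uP_def mult_pCons_left coeff_pCons)

lemma coeff_vP_mult:
  "coeff (vP * X) 0 = coeff X 0"
  "coeff (vP * X) (Suc k) = coeff X (Suc k) + coeff X k"
  by (simp_all add: vP_def mult_pCons_left coeff_pCons)

lemma cheb_coeff0: "coeff (fst (cheb n)) 0 = 1"
proof (induction n)
  case 0 then show ?case by simp
next
  case (Suc n) then show ?case
    by (simp add: coeff_vP_mult coeff_uP_mult)
qed

lemma cheb_rec:
  fixes n k :: nat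
  defines "c \<equiv> coeff (fst (cheb n))"
  shows "real (Suc k) * (2 * real k + 1) * c (Suc k) = ((real n)\<^sup>2 - (real k)\<^sup>2) * c k"
proof -
  define d where "d = coeff (snd (cheb n))"
  have D1: "real (Suc j) * c (Suc j) = real n * d j" for j
  proof -
    have "coeff (pderiv (fst (cheb n))) j = coeff (of_nat n * snd (cheb n)) j"
      using cheb_deriv[of n] by simp
    thus ?thesis by (simp add: coeff_pderiv c_def d_def of_nat_poly)
  qed
  have D2: "coeff (uP * pderiv (snd (cheb n))) j = real n * c j - coeff (vP * snd (cheb n)) j" for j
  proof -
    have "coeff (uP * pderiv (snd (cheb n))) j = coeff (of_nat n * fst (cheb n) - vP * snd (cheb n)) j"
      using cheb_deriv[of n] by simp
    thus ?thesis by (simp add: c_def of_nat_poly)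
  qed
  have G: "(2 * real j + 3) * d (Suc j) + real (Suc j) * d j = real n * c (Suc j)" for j
  proof (cases j)
    case 0
    then show ?thesis using D2[of 1] by (simp add: coeff_uP_mult coeff_vP_mult d_def coeff_pderiv algebra_simps)
  next
    case (Suc j')
    then show ?thesis using D2[of "Suc j"] by (simp add: coeff_uP_mult coeff_vP_mult d_def coeff_pderiv algebra_simps)
  qed
  show ?thesis
  proof (cases k)
    case 0
    have "0 = real n * c 0 - d 0" using D2[of 0] by (simp add: coeff_uP_mult coeff_vP_mult d_def)
    with D1[of 0] show ?thesis using 0 by (simp add: power2_eq_square algebra_simps)
  next
    case (Suc k')
    have e1: "real n * d k = real (Suc k) * c (Suc k)" using D1[of k] by simp
    have e2: "real n * d k' = real k * c k" using D1[of k'] Suc by simp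
    have "real n * ((2 * real k' + 3) * d k + real k * d k') = real n * (real n * c k)"
      using G[of k'] Suc by simp
    hence "(2 * real k + 1) * (real n * d k) + real k * (real n * d k') = real n * real n * c k"
      using Suc by (simp add: algebra_simps)
    hence "(2 * real k + 1) * (real (Suc k) * c (Suc k)) + real k * (real k * c k) = real n * real n * c k"
      by (simp only: e1 e2)
    thus ?thesis by (simp add: power2_eq_square algebra_simps)
  qed
qed

lemma cheb_closed:
  "fact k * (2 ^ k * pochhammer (1/2) k) * coeff (fst (cheb n)) k = (\<Prod>j<k. (real n)\<^sup>2 - (real j)\<^sup>2)"
proof (induction k)
  case 0 then show ?case by (simp add: cheb_coeff0)
next
  case (Suc k)
  have "fact (Suc k) * (2 ^ Suc k * pochhammer (1/2) (Suc k)) * coeff (fst (cheb n)) (Suc k)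
      = fact k * (2 ^ k * pochhammer (1/2) k) * (real (Suc k) * (2 * real k + 1) * coeff (fst (cheb n)) (Suc k))"
    by (simp add: pochhammer_rec' algebra_simps)
  also have "\<dots> = fact k * (2 ^ k * pochhammer (1/2) k) * (((real n)\<^sup>2 - (real k)\<^sup>2) * coeff (fst (cheb n)) k)"
    by (simp only: cheb_rec)
  also have "\<dots> = ((real n)\<^sup>2 - (real k)\<^sup>2) * (fact k * (2 ^ k * pochhammer (1/2) k) * coeff (fst (cheb n)) k)"
    by (simp only: mult_ac)
  also have "\<dots> = (\<Prod>j<Suc k. (real n)\<^sup>2 - (real j)\<^sup>2)"
    using Suc by (simp add: lessThan_Suc mult_ac)
  finally show ?case .
qed

lemma cheb_binom:
  "fst (cheb n) = (\<Sum>s\<le>n. smult (of_nat (n choose (2 * s))) (uP ^ s * vP ^ (n - 2 * s))) \<and>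
   snd (cheb n) = (\<Sum>s\<le>n. smult (of_nat (n choose (2 * s+1))) (uP ^ s * vP ^ (n - 1 - 2 * s)))"
proof (induction n)
  case 0 then show ?case by simp
next
  case (Suc n)
  obtain p q where pq: "cheb n = (p, q)" by (cases "cheb n")
  from Suc pq have hp: "p = (\<Sum>s\<le>n. smult (of_nat (n choose (2 * s))) (uP ^ s * vP ^ (n - 2 * s)))"
    and hq: "q = (\<Sum>s\<le>n. smult (of_nat (n choose (2 * s+1))) (uP ^ s * vP ^ (n - 1 - 2 * s)))" by auto
  define g where "g s = smult (of_nat (n choose (2 * s))) (uP ^ s * vP ^ (Suc n - 2 * s))" for s
  define h where "h s = smult (of_nat (n choose (2 * s+1))) (uP ^ Suc s * vP ^ (n - 1 - 2 * s))" for s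
  define f where "f s = smult (of_nat (Suc n choose (2 * s))) (uP ^ s * vP ^ (Suc n - 2 * s))" for s
  have "vP * p = (\<Sum>s\<le>n. g s)"
    unfolding hp sum_distrib_left g_def
  proof (rule sum.cong[OF refl])
    fix s assume "s \<in> {..n}"
    show "vP * smult (of_nat (n choose (2 * s))) (uP ^ s * vP ^ (n - 2 * s))
        = smult (of_nat (n choose (2 * s))) (uP ^ s * vP ^ (Suc n - 2 * s))"
    proof (cases "2 * s \<le> n")
      case True
      hence "Suc n - 2 * s = Suc (n - 2 * s)" by simp
      thus ?thesis by (simp add: algebra_simps)
    qed (simp add: binomial_eq_0)
  qed
  also have "\<dots> = (\<Sum>s\<le>Suc n. g s)" by (simp add: g_def)
  also have "\<dots> = g 0 + (\<Sum>s\<le>n. g (Suc s))" by (rule sum.atMost_Suc_shift)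
  finally have A: "vP * p = g 0 + (\<Sum>s\<le>n. g (Suc s))" .
  have B: "uP * q = (\<Sum>s\<le>n. h s)"
    unfolding hq sum_distrib_left h_def by (simp add: algebra_simps)
  have "(\<Sum>s\<le>Suc n. f s) = f 0 + (\<Sum>s\<le>n. f (Suc s))" by (rule sum.atMost_Suc_shift)
  also have "\<dots> = g 0 + (\<Sum>s\<le>n. g (Suc s) + h s)"
  proof -
    have "f 0 = g 0" by (simp add: f_def g_def)
    moreover have "f (Suc s) = g (Suc s) + h s" for s
    proof -
      have e: "Suc n - 2 * Suc s = n - 1 - 2 * s" by simp
      show ?thesis unfolding f_def g_def h_def e
        by (simp add: smult_add_left[symmetric] add.commute del: smult_add_left)
    qed
    ultimately show ?thesis by simp
  qed
  finally have P: "vP * p + uP * q = (\<Sum>s\<le>Suc n. f s)"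
    using A B by (simp add: sum.distrib)
  have "p + vP * q = (\<Sum>s\<le>Suc n. smult (of_nat (Suc n choose (2 * s+1))) (uP ^ s * vP ^ (Suc n - 1 - 2 * s)))"
  proof -
    have "vP * q = (\<Sum>s\<le>n. smult (of_nat (n choose (2 * s+1))) (uP ^ s * vP ^ (n - 2 * s)))"
      unfolding hq sum_distrib_left
    proof (rule sum.cong[OF refl])
      fix s assume "s \<in> {..n}"
      show "vP * smult (of_nat (n choose (2 * s+1))) (uP ^ s * vP ^ (n - 1 - 2 * s))
          = smult (of_nat (n choose (2 * s+1))) (uP ^ s * vP ^ (n - 2 * s))"
      proof (cases "2 * s + 1 \<le> n")
        case True
        hence "n - 2 * s = Suc (n - 1 - 2 * s)" by simp
        thus ?thesis by (simp add: algebra_simps)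
      qed (simp add: binomial_eq_0)
    qed
    hence "p + vP * q = (\<Sum>s\<le>n. smult (of_nat (Suc n choose (2 * s+1))) (uP ^ s * vP ^ (n - 2 * s)))"
      unfolding hp by (simp add: sum.distrib[symmetric] smult_add_left[symmetric] del: smult_add_left)
    also have "\<dots> = (\<Sum>s\<le>Suc n. smult (of_nat (Suc n choose (2 * s+1))) (uP ^ s * vP ^ (n - 2 * s)))"
      by (simp add: binomial_eq_0)
    finally show ?thesis by simp
  qed
  with P show ?case by (simp add: pq f_def)
qed

lemma poly_uP: "poly uP t = (1 + t)\<^sup>2 - 1"
  by (simp add: uP_def power2_eq_square algebra_simps)
lemma poly_vP: "poly vP t = 1 + t"
  by (simp add: vP_def)
lemma vP_sq: "vP ^ 2 = 1 + uP"
  by (simp add: vP_def uP_def power2_eq_square poly_eq_iff coeff_pCons numeral_poly split: nat.split)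
lemma nonnegp_uP: "nonnegp uP"
  by (simp add: uP_def nonnegp_pCons nonnegp_0)
lemma nonnegp_vP: "nonnegp vP"
  by (simp add: vP_def nonnegp_pCons nonnegp_0)

definition RP :: "nat \<Rightarrow> nat \<Rightarrow> nat \<Rightarrow> real poly" where
  "RP n p mm = (\<Sum>s\<le>p. smult (of_nat ((p choose s) * ((p + mm) choose s))) (uP ^ s * vP ^ (n - 2 * s)))"

lemma zern_poly:
  assumes "n = 2 * p + mm"
  shows "zernikeR n mm r = poly (RP n p mm) (r - 1)"
proof -
  have pd: "(n - mm) div 2 = p" using assms by simp
  have "zernikeR n mm r = r ^ mm * (\<Sum>s=0..p. ((real p + 0) gchoose (p - s)) * ((real p + real mm) gchoose s)
                 * ((2 * r\<^sup>2 - 1 - 1) / 2) ^ s * ((2 * r\<^sup>2 - 1 + 1) / 2) ^ (p - s))"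
    unfolding zernikeR_def jacobiP_def pd by simp
  also have "\<dots> = (\<Sum>s\<le>p. real ((p choose s) * ((p + mm) choose s)) * ((r\<^sup>2 - 1) ^ s * r ^ (n - 2 * s)))"
    unfolding sum_distrib_left atLeast0AtMost
  proof (rule sum.cong[OF refl])
    fix s assume s: "s \<in> {..p}"
    have g1: "(real p + 0) gchoose (p - s) = real (p choose s)"
      using s by (simp add: binomial_gbinomial[symmetric] binomial_symmetric[symmetric])
    have g2: "(real p + real mm) gchoose s = real ((p + mm) choose s)"
      by (metis binomial_gbinomial of_nat_add)
    have e: "n - 2 * s = mm + 2 * (p - s)" using s assms by auto
    show "r ^ mm * (((real p + 0) gchoose (p - s)) * ((real p + real mm) gchoose s) *
          ((2 * r\<^sup>2 - 1 - 1) / 2) ^ s * ((2 * r\<^sup>2 - 1 + 1) / 2) ^ (p - s))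
        = real ((p choose s) * ((p + mm) choose s)) * ((r\<^sup>2 - 1) ^ s * r ^ (n - 2 * s))"
    proof -
      have h1: "(2 * r\<^sup>2 - 1 - 1) / 2 = r\<^sup>2 - 1" by simp
      have h2: "(2 * r\<^sup>2 - 1 + 1) / 2 = r\<^sup>2" by simp
      show ?thesis unfolding g1 g2 e h1 h2 by (simp add: power_add power_mult mult_ac power_mult_distrib[symmetric] power_commutes flip: power_mult)
    qed
  qed
  also have "\<dots> = poly (RP n p mm) (r - 1)"
    by (simp add: RP_def poly_sum poly_uP poly_vP)
  finally show ?thesis .
qed

lemma abel_identity:
  fixes x b :: "nat \<Rightarrow> real"
  shows "(\<Sum>s\<le>N. x s * b s) = (\<Sum>S<N. (\<Sum>s\<le>S. x s) * (b S - b (Suc S))) + (\<Sum>s\<le>N. x s) * b N"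
  by (induction N) (simp_all add: algebra_simps)

lemma abel_nonneg:
  fixes x b :: "nat \<Rightarrow> real"
  assumes "\<And>S. S \<le> N \<Longrightarrow> 0 \<le> (\<Sum>s\<le>S. x s)"
    and "\<And>s. s < N \<Longrightarrow> b (Suc s) \<le> b s" and "0 \<le> b N"
  shows "0 \<le> (\<Sum>s\<le>N. x s * b s)"
  unfolding abel_identity
proof (rule add_nonneg_nonneg)
  show "0 \<le> (\<Sum>S<N. (\<Sum>s\<le>S. x s) * (b S - b (Suc S)))"
    by (rule sum_nonneg, rule mult_nonneg_nonneg) (use assms in auto)
  show "0 \<le> (\<Sum>s\<le>N. x s) * b N" using assms by simp
qed

lemma beta_nonneg: "0 \<le> coeff (uP ^ s * vP ^ j) k"
  using nonnegp_mult[OF nonnegp_power[OF nonnegp_uP] nonnegp_power[OF nonnegp_vP]]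
  unfolding nonnegp_def by blast

lemma beta_mono:
  assumes "2 * s + 2 \<le> n"
  shows "coeff (uP ^ Suc s * vP ^ (n - 2 * Suc s)) k \<le> coeff (uP ^ s * vP ^ (n - 2 * s)) k"
proof -
  have "n - 2 * s = (n - 2 * Suc s) + 2" using assms by simp
  hence "uP ^ s * vP ^ (n - 2 * s) = uP ^ s * vP ^ (n - 2 * Suc s) * vP ^ 2"
    by (simp only: power_add mult.assoc)
  also have "\<dots> = uP ^ s * vP ^ (n - 2 * Suc s) + uP ^ Suc s * vP ^ (n - 2 * Suc s)"
    by (simp add: vP_sq algebra_simps)
  finally show ?thesis using beta_nonneg[of s "n - 2 * Suc s" k] by simp
qed

lemma reduce:
  fixes lam :: real
  assumes n: "n = 2 * p + mm"
    and pref: "\<And>S. S \<le> n div 2 \<Longrightarrow>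
        lam * (\<Sum>s\<le>S. real (n choose (2 * s))) \<le> (\<Sum>s\<le>S. real ((p choose s) * ((p + mm) choose s)))"
  shows "lam * coeff (fst (cheb n)) k \<le> coeff (RP n p mm) k"
proof -
  define N where "N = n div 2"
  define b where "b s = coeff (uP ^ s * vP ^ (n - 2 * s)) k" for s
  define w where "w s = real ((p choose s) * ((p + mm) choose s))" for s
  define c where "c s = real (n choose (2 * s))" for s
  have pN: "p \<le> N" using n by (simp add: N_def)
  have "coeff (fst (cheb n)) k = (\<Sum>s\<le>n. c s * b s)"
    using cheb_binom[of n] by (simp add: coeff_sum b_def c_def)
  also have "\<dots> = (\<Sum>s\<le>N. c s * b s)"
  proof (rule sum.mono_neutral_right)
    show "\<forall>i\<in>{..n} - {..N}. c i * b i = 0" by (auto simp: c_def N_def binomial_eq_0)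
  qed (auto simp: N_def)
  finally have C: "coeff (fst (cheb n)) k = (\<Sum>s\<le>N. c s * b s)" .
  have "coeff (RP n p mm) k = (\<Sum>s\<le>p. w s * b s)"
    by (simp add: RP_def coeff_sum b_def w_def)
  also have "\<dots> = (\<Sum>s\<le>N. w s * b s)"
  proof (rule sum.mono_neutral_left)
    show "\<forall>i\<in>{..N} - {..p}. w i * b i = 0" by (auto simp: w_def binomial_eq_0)
  qed (use pN in auto)
  finally have R: "coeff (RP n p mm) k = (\<Sum>s\<le>N. w s * b s)" .
  have "0 \<le> (\<Sum>s\<le>N. (w s - lam * c s) * b s)"
  proof (rule abel_nonneg)
    fix S assume "S \<le> N"
    then show "0 \<le> (\<Sum>s\<le>S. w s - lam * c s)"
      using pref[of S] by (simp add: sum_subtractf sum_distrib_left w_def c_def N_def)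
  next
    fix s assume "s < N"
    then show "b (Suc s) \<le> b s" unfolding b_def by (intro beta_mono) (simp add: N_def)
  next
    show "0 \<le> b N" by (simp add: b_def beta_nonneg)
  qed
  then show ?thesis unfolding C R
    by (simp add: algebra_simps sum_subtractf sum_distrib_left)
qed

lemma choose_step: "Suc k * (n choose Suc k) = (n - k) * (n choose k)"
  by (metis binomial_absorption binomial_absorb_comp)

lemma cb_rec: "real (Suc s) * real ((2 * Suc s) choose Suc s) = 2 * (2 * real s + 1) * real ((2 * s) choose s)"
proof -
  have c: "Suc s * ((Suc (2 * s)) choose Suc s) = Suc (2 * s) * ((2 * s) choose s)"
    by (rule Suc_times_binomial)
  have sym: "Suc (2 * s) choose s = Suc (2 * s) choose Suc s"
    using binomial_symmetric[of s "Suc (2 * s)"] by simp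
  have e: "(2 * Suc s) choose Suc s = 2 * (Suc (2 * s) choose Suc s)"
    using sym by simp
  have "Suc s * ((2 * Suc s) choose Suc s) = 2 * (Suc (2 * s) * ((2 * s) choose s))"
    unfolding e using c by (metis mult.left_commute)
  hence "real (Suc s * ((2 * Suc s) choose Suc s)) = real (2 * (Suc (2 * s) * ((2 * s) choose s)))"
    by (simp only:)
  thus ?thesis by (simp only: of_nat_mult) (simp add: algebra_simps del: binomial_Suc_Suc)
qed

lemma cb_lower: "16 ^ s \<le> real ((2 * s) choose s) ^ 2 * (4 * real s + 1)"
proof (induction s)
  case 0 then show ?case by simp
next
  case (Suc s)
  define a where "a = real ((2 * s) choose s)"
  define b where "b = real ((2 * Suc s) choose Suc s)"
  have rb: "real (Suc s) * b = 2 * (2 * real s + 1) * a" using cb_rec[of s] by (simp add: a_def b_def)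
  have IH: "16 ^ s \<le> a ^ 2 * (4 * real s + 1)" using Suc by (simp add: a_def)
  have "16 * 16 ^ s * (real (Suc s))\<^sup>2 \<le> 16 * (a ^ 2 * (4 * real s + 1)) * (real (Suc s))\<^sup>2"
    using IH by (intro mult_right_mono) auto
  also have "\<dots> \<le> 4 * (2 * real s + 1)\<^sup>2 * a\<^sup>2 * (4 * real (Suc s) + 1)"
  proof -
    have "16 * (4 * real s + 1) * (real (Suc s))\<^sup>2 \<le> 4 * (2 * real s + 1)\<^sup>2 * (4 * real (Suc s) + 1)"
      by (simp add: power2_eq_square algebra_simps)
    from mult_right_mono[OF this, of "a^2"] show ?thesis by (simp add: algebra_simps)
  qed
  also have "\<dots> = (real (Suc s) * b)\<^sup>2 * (4 * real (Suc s) + 1)"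
    unfolding rb by (simp add: power2_eq_square algebra_simps)
  also have "\<dots> = b\<^sup>2 * (4 * real (Suc s) + 1) * (real (Suc s))\<^sup>2"
    by (simp only: power_mult_distrib mult_ac)
  finally have "16 ^ Suc s * (real (Suc s))\<^sup>2 \<le> b\<^sup>2 * (4 * real (Suc s) + 1) * (real (Suc s))\<^sup>2"
    by simp
  hence "16 ^ Suc s \<le> b\<^sup>2 * (4 * real (Suc s) + 1)"
    by (rule mult_right_le_imp_le) simp
  thus ?case by (simp add: b_def)
qed

lemma cb_upper: "real ((2 * s) choose s) ^ 2 * (3 * real s + 1) \<le> 16 ^ s"
proof (induction s)
  case 0 then show ?case by simp
next
  case (Suc s)
  define a where "a = real ((2 * s) choose s)"
  define b where "b = real ((2 * Suc s) choose Suc s)"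
  have rb: "real (Suc s) * b = 2 * (2 * real s + 1) * a" using cb_rec[of s] by (simp add: a_def b_def)
  have IH: "a ^ 2 * (3 * real s + 1) \<le> 16 ^ s" using Suc by (simp add: a_def)
  have "b\<^sup>2 * (3 * real (Suc s) + 1) * (real (Suc s))\<^sup>2 = (real (Suc s) * b)\<^sup>2 * (3 * real (Suc s) + 1)"
    by (simp only: power_mult_distrib mult_ac)
  also have "(real (Suc s) * b)\<^sup>2 * (3 * real (Suc s) + 1) = 4 * (2 * real s + 1)\<^sup>2 * a\<^sup>2 * (3 * real (Suc s) + 1)"
    unfolding rb by (simp add: power2_eq_square algebra_simps)
  also have "\<dots> \<le> 16 * (a ^ 2 * (3 * real s + 1)) * (real (Suc s))\<^sup>2"
  proof -
    have "4 * (2 * real s + 1)\<^sup>2 * (3 * real (Suc s) + 1) \<le> 16 * (3 * real s + 1) * (real (Suc s))\<^sup>2"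
      by (simp add: power2_eq_square algebra_simps)
    from mult_right_mono[OF this, of "a^2"] show ?thesis by (simp add: algebra_simps)
  qed
  also have "\<dots> \<le> 16 * 16 ^ s * (real (Suc s))\<^sup>2"
    using IH by (intro mult_right_mono) auto
  finally have "b\<^sup>2 * (3 * real (Suc s) + 1) * (real (Suc s))\<^sup>2 \<le> 16 ^ Suc s * (real (Suc s))\<^sup>2"
    by simp
  hence "b\<^sup>2 * (3 * real (Suc s) + 1) \<le> 16 ^ Suc s"
    by (rule mult_right_le_imp_le) simp
  thus ?case by (simp add: b_def)
qed

lemma binom_upper:
  assumes "1 \<le> n"
  shows "real (n choose k) ^ 2 * real n \<le> 4 ^ n"
proof -
  have m: "real (n choose k) \<le> real (n choose (n div 2))" by (simp add: binomial_maximum)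
  have "real (n choose (n div 2)) ^ 2 * real n \<le> 4 ^ n"
  proof (cases "even n")
    case True
    then obtain a where a: "n = 2 * a" by (auto elim: evenE)
    have "real ((2 * a) choose a) ^ 2 * real n \<le> real ((2 * a) choose a) ^ 2 * (3 * real a + 1)"
      using a by (intro mult_left_mono) auto
    also have "\<dots> \<le> 16 ^ a" by (rule cb_upper)
    finally show ?thesis using a by (simp add: power_mult)
  next
    case False
    then obtain a where a: "n = 2 * a + 1" by (auto elim: oddE)
    have nd: "n div 2 = a" using a by simp
    have e: "(2 * Suc a) choose Suc a = 2 * (n choose a)"
      using a binomial_symmetric[of a "Suc (2 * a)"] by simp
    have "real (n choose a) ^ 2 * real n \<le> real (n choose a) ^ 2 * (3 * real (Suc a) + 1)"
      using a by (intro mult_left_mono) auto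
    also have "\<dots> = real ((2 * Suc a) choose Suc a) ^ 2 * (3 * real (Suc a) + 1) / 4"
      unfolding e by (simp add: power2_eq_square)
    also have "\<dots> \<le> 16 ^ Suc a / 4" using cb_upper[of "Suc a"] by (simp add: divide_right_mono)
    also have "\<dots> = 4 ^ n" using a by (simp add: power_mult power_add)
    finally show ?thesis using nd by simp
  qed
  moreover have "real (n choose k) ^ 2 * real n \<le> real (n choose (n div 2)) ^ 2 * real n"
    using m by (intro mult_right_mono power_mono) auto
  ultimately show ?thesis by linarith
qed

lemma binom_central_lower: "4 ^ N \<le> real (N choose (N div 2)) ^ 2 * (4 * (2 * real N + 1))"
proof (cases "even N")
  case True
  then obtain a where a: "N = 2 * a" by (auto elim: evenE)
  have "4 ^ N = (16::real) ^ a" using a by (simp add: power_mult)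
  also have "\<dots> \<le> real ((2 * a) choose a) ^ 2 * (4 * real a + 1)" by (rule cb_lower)
  also have "\<dots> \<le> real ((2 * a) choose a) ^ 2 * (4 * (2 * real N + 1))"
    using a by (intro mult_left_mono) auto
  finally show ?thesis using a by simp
next
  case False
  then obtain a where a: "N = 2 * a + 1" by (auto elim: oddE)
  have nd: "N div 2 = a" using a by simp
  have ge: "(2 * a) choose a \<le> N choose a"
    using a by (cases a) auto
  have "4 ^ N = 4 * (16::real) ^ a" using a by (simp add: power_mult power_add)
  also have "\<dots> \<le> 4 * (real ((2 * a) choose a) ^ 2 * (4 * real a + 1))" using cb_lower[of a] by simp
  also have "\<dots> \<le> real (N choose a) ^ 2 * (4 * (2 * real N + 1))"
  proof -
    have "real ((2 * a) choose a) ^ 2 \<le> real (N choose a) ^ 2" using ge by (intro power_mono) auto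
    moreover have "4 * real a + 1 \<le> 2 * real N + 1" using a by simp
    ultimately have "real ((2 * a) choose a) ^ 2 * (4 * real a + 1) \<le> real (N choose a) ^ 2 * (2 * real N + 1)"
      by (intro mult_mono) auto
    thus ?thesis by (simp add: algebra_simps)
  qed
  finally show ?thesis using nd by simp
qed

lemma binom_shift:
  fixes N q d :: nat
  assumes "q + d \<le> N"
  shows "real (N choose (q + d)) * real (Suc q) ^ d \<le> real (N choose q) * real (N - q) ^ d"
  using assms
proof (induction d)
  case 0 then show ?case by simp
next
  case (Suc d)
  have IH: "real (N choose (q + d)) * real (Suc q) ^ d \<le> real (N choose q) * real (N - q) ^ d"
    using Suc by simp
  have st: "real (Suc (q + d)) * real (N choose Suc (q + d)) = real (N - (q + d)) * real (N choose (q + d))"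
    using choose_step[of "q + d" N] by (metis of_nat_mult)
  have "real (N choose (q + Suc d)) * real (Suc q) ^ Suc d
      = real (N choose Suc (q + d)) * real (Suc q) * real (Suc q) ^ d" by (simp add: algebra_simps)
  also have "\<dots> \<le> real (N choose Suc (q + d)) * real (Suc (q + d)) * real (Suc q) ^ d"
    by (intro mult_right_mono mult_left_mono) auto
  also have "\<dots> = real (N - (q + d)) * (real (N choose (q + d)) * real (Suc q) ^ d)"
    using st by (simp add: algebra_simps)
  also have "\<dots> \<le> real (N - q) * (real (N choose q) * real (N - q) ^ d)"
    by (rule mult_mono) (use IH Suc.prems in auto)
  also have "\<dots> = real (N choose q) * real (N - q) ^ Suc d" by simp
  finally show ?case .
qed

lemma w_identity:
  assumes "n = 2 * p + mm" "s \<le> p"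
  shows "real ((p choose s) * ((p + mm) choose s)) * real (n choose p)
       = real (n choose (2 * s)) * (real ((2 * s) choose s) * real ((n - 2 * s) choose (p - s)))"
proof -
  obtain a where a: "p = s + a" using assms(2) le_Suc_ex by blast
  have n: "n = 2 * s + (2 * a + mm)" using assms a by simp
  define M where "M = 2 * s + (2 * a + mm)"
  have f1: "real ((s + a) choose s) = fact (s + a) / (fact s * fact a)"
    by (subst binomial_fact) auto
  have f2: "real ((s + a + mm) choose s) = fact (s + a + mm) / (fact s * fact (a + mm))"
    by (subst binomial_fact) (auto simp: add.assoc)
  have f3: "real (M choose (s + a)) = fact M / (fact (s + a) * fact (s + a + mm))"
    by (subst binomial_fact) (auto simp: M_def algebra_simps)
  have f4: "real (M choose (2 * s)) = fact M / (fact (2 * s) * fact (2 * a + mm))"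
    by (subst binomial_fact) (auto simp: M_def)
  have f5: "real ((2 * s) choose s) = fact (2 * s) / (fact s * fact s)"
    by (subst binomial_fact) (auto simp: mult_2)
  have f6: "real ((2 * a + mm) choose a) = fact (2 * a + mm) / (fact a * fact (a + mm))"
    by (subst binomial_fact) auto
  have key: "real ((s + a) choose s) * real ((s + a + mm) choose s) * real (M choose (s + a))
     = real (M choose (2 * s)) * (real ((2 * s) choose s) * real ((2 * a + mm) choose a))"
    unfolding f1 f2 f3 f4 f5 f6 by (simp add: field_simps)
  have e: "n - 2 * s = 2 * a + mm" "p - s = a" "n = M" "p + mm = s + a + mm" using n a M_def by auto
  show ?thesis using key unfolding e(1,2) of_nat_mult by (simp add: e(3) a add.assoc)
qed

lemma exp_bound:
  fixes y :: real and m d :: nat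
  assumes "0 \<le> y" "y \<le> 1/2" "d \<le> m"
  shows "exp (- 2 * y * real m) \<le> (1 - y) ^ d"
proof -
  have l: "- y - 2 * y\<^sup>2 \<le> ln (1 - y)" using ln_one_minus_pos_lower_bound assms by auto
  have "y * (2 * y) \<le> y * 1" using assms by (intro mult_left_mono) auto
  hence "- 2 * y \<le> - y - 2 * y\<^sup>2" by (simp add: power2_eq_square)
  hence l2: "- 2 * y \<le> ln (1 - y)" using l by linarith
  have "exp (- 2 * y * real m) \<le> exp (real m * ln (1 - y))"
    using mult_left_mono[OF l2, of "real m"] by (simp add: mult_ac)
  also have "\<dots> = (1 - y) ^ m" using assms by (simp add: exp_of_nat_mult)
  also have "\<dots> \<le> (1 - y) ^ d" using assms by (intro power_decreasing) auto
  finally show ?thesis .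
qed

lemma w_lower:
  fixes n p mm s :: nat
  assumes n: "n = 2 * p + mm" and n4: "4 \<le> n" and mmb: "16 * mm \<le> n" and sb: "2 * s \<le> n div 2 + 1"
  shows "exp (- 16 * (real mm)\<^sup>2 / real n) / (6 * sqrt (real n)) * real (n choose (2 * s))
         \<le> real ((p choose s) * ((p + mm) choose s))"
proof -
  have sp: "s \<le> p" using n n4 mmb sb by linarith
  define q where "q = p - s"
  define N' where "N' = n - 2 * s"
  define d where "d = mm div 2"
  define h where "h = N' div 2"
  have N'q: "N' = 2 * q + mm" using n sp by (simp add: N'_def q_def)
  have qd: "q + d = h" using N'q by (simp add: h_def d_def)
  have N'n: "n \<le> 4 * N'" using n4 sb by (simp add: N'_def)
  have dm: "d \<le> mm" by (simp add: d_def)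
  define y where "y = 8 * real mm / real n"
  define E where "E = exp (- 16 * (real mm)\<^sup>2 / real n)"
  have npos: "0 < real n" using n4 by simp
  have y0: "0 \<le> y" by (simp add: y_def)
  have y1: "y \<le> 1/2" using mmb npos by (simp add: y_def field_simps)
  have qm: "0 < real q + real mm" using N'q N'n n4 by (cases "q + mm = 0") auto
  have ymm: "real mm \<le> y * (real q + real mm) + 1"
  proof -
    have "real n \<le> 8 * real q + 8 * real mm" using N'n N'q by linarith
    hence "real mm * real n \<le> real mm * (8 * real q + 8 * real mm)" by (intro mult_left_mono) auto
    hence "real mm \<le> 8 * real mm * (real q + real mm) / real n" using npos by (simp add: field_simps)
    thus ?thesis by (simp add: y_def)
  qed
  have x1: "(1 - y) * (real q + real mm) \<le> real (Suc q)" using ymm by (simp add: algebra_simps)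
  have E_le: "E \<le> (1 - y) ^ d"
  proof -
    have "E = exp (- 2 * y * real mm)" by (simp add: E_def y_def power2_eq_square field_simps)
    also have "\<dots> \<le> (1 - y) ^ d" by (rule exp_bound[OF y0 y1 dm])
    finally show ?thesis .
  qed
  have E0: "0 \<le> E" by (simp add: E_def)
  have G: "E * real (N' choose h) \<le> real (N' choose q)"
  proof -
    have "(1 - y) ^ d * (real q + real mm) ^ d \<le> real (Suc q) ^ d"
      unfolding power_mult_distrib[symmetric] using x1 y1 qm by (intro power_mono) auto
    have sh: "real (N' choose h) * real (Suc q) ^ d \<le> real (N' choose q) * real (N' - q) ^ d"
      using binom_shift[of q d N'] qd N'q by (simp add: h_def)
    have Nq: "real (N' - q) = real q + real mm" using N'q by simp
    have "E * real (N' choose h) * (real q + real mm) ^ d \<le> (1 - y) ^ d * real (N' choose h) * (real q + real mm) ^ d"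
      using E_le by (intro mult_right_mono) auto
    also have "\<dots> = real (N' choose h) * ((1 - y) ^ d * (real q + real mm) ^ d)" by (simp add: mult_ac)
    also have "\<dots> \<le> real (N' choose h) * real (Suc q) ^ d"
      by (intro mult_left_mono) (use \<open>(1 - y) ^ d * (real q + real mm) ^ d \<le> real (Suc q) ^ d\<close> in auto)
    also have "\<dots> \<le> real (N' choose q) * (real q + real mm) ^ d" using sh Nq by simp
    finally show ?thesis using qm by (simp add: mult_le_cancel_right)
  qed
  define A where "A = real ((2 * s) choose s) * real (N' choose q)"
  define B where "B = real (n choose p)"
  have A0: "E * (real ((2 * s) choose s) * real (N' choose h)) \<le> A"
    unfolding A_def using G by (simp add: mult_left_mono mult.left_commute)
  have sq: "4 ^ n * E\<^sup>2 \<le> A\<^sup>2 * (4 * (4 * real s + 1) * (2 * real N' + 1))"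
  proof -
    have "4 ^ n * E\<^sup>2 = 16 ^ s * 4 ^ N' * E\<^sup>2"
    proof -
      have nn: "n = 2 * s + N'" using sp n by (simp add: N'_def)
      have "(4::real) ^ n = 16 ^ s * 4 ^ N'" unfolding nn by (simp add: power_add power_mult)
      thus ?thesis by simp
    qed
    also have "\<dots> \<le> (real ((2 * s) choose s) ^ 2 * (4 * real s + 1)) *
                   (real (N' choose h) ^ 2 * (4 * (2 * real N' + 1))) * E\<^sup>2"
      using cb_lower[of s] binom_central_lower[of N'] unfolding h_def
      by (intro mult_right_mono mult_mono) auto
    also have "\<dots> = (E * (real ((2 * s) choose s) * real (N' choose h)))\<^sup>2 * (4 * (4 * real s + 1) * (2 * real N' + 1))"
      by (simp add: power2_eq_square algebra_simps)
    also have "\<dots> \<le> A\<^sup>2 * (4 * (4 * real s + 1) * (2 * real N' + 1))"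
      using A0 E0 by (intro mult_right_mono power_mono) auto
    finally show ?thesis .
  qed
  have fac: "4 * (4 * real s + 1) * (2 * real N' + 1) \<le> 36 * (real n)\<^sup>2"
  proof -
    have a: "4 * real s + 1 \<le> 3 * real n" using sb n4 by linarith
    have b: "2 * real N' + 1 \<le> 3 * real n" using n4 by (simp add: N'_def)
    have "(4 * real s + 1) * (2 * real N' + 1) \<le> (3 * real n) * (3 * real n)"
      using a b by (intro mult_mono) auto
    moreover have "(3 * real n) * (3 * real n) = 9 * (real n)\<^sup>2" by (simp add: power2_eq_square)
    moreover have "4 * (4 * real s + 1) * (2 * real N' + 1) = 4 * ((4 * real s + 1) * (2 * real N' + 1))"
      by (simp only: mult.assoc)
    ultimately show ?thesis by linarith
  qed
  have Bn: "B\<^sup>2 * real n \<le> 4 ^ n" unfolding B_def by (rule binom_upper) (use n4 in simp)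
  have "(E * B)\<^sup>2 * real n \<le> (6 * sqrt (real n) * A)\<^sup>2 * real n"
  proof -
    have "(E * B)\<^sup>2 * real n = E\<^sup>2 * (B\<^sup>2 * real n)" by (simp add: power_mult_distrib)
    also have "\<dots> \<le> E\<^sup>2 * 4 ^ n" using Bn by (intro mult_left_mono) auto
    also have "\<dots> \<le> A\<^sup>2 * (4 * (4 * real s + 1) * (2 * real N' + 1))"
      using sq by (simp only: mult.commute)
    also have "\<dots> \<le> A\<^sup>2 * (36 * (real n)\<^sup>2)"
      by (rule mult_left_mono[OF fac]) simp
    also have "\<dots> = (6 * sqrt (real n) * A)\<^sup>2 * real n"
      using npos by (simp add: power_mult_distrib power2_eq_square)
    finally show ?thesis .
  qed
  hence "(E * B)\<^sup>2 \<le> (6 * sqrt (real n) * A)\<^sup>2" using npos by simp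
  hence EB: "E * B \<le> 6 * sqrt (real n) * A"
    by (rule power2_le_imp_le) (use E0 npos in \<open>simp add: A_def\<close>)
  have Bpos: "0 < B" using n by (simp add: B_def)
  have WI: "real ((p choose s) * ((p + mm) choose s)) * B = real (n choose (2 * s)) * A"
    using w_identity[OF n sp] unfolding A_def B_def N'_def q_def .
  have "E / (6 * sqrt (real n)) * real (n choose (2 * s)) * B
       = real (n choose (2 * s)) * (E * B) / (6 * sqrt (real n))" by simp
  also have "\<dots> \<le> real (n choose (2 * s)) * (6 * sqrt (real n) * A) / (6 * sqrt (real n))"
    using EB by (intro divide_right_mono mult_left_mono) auto
  also have "\<dots> = real ((p choose s) * ((p + mm) choose s)) * B"
    using npos WI by simp
  finally have X: "E / (6 * sqrt (real n)) * real (n choose (2 * s)) * B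
       \<le> real ((p choose s) * ((p + mm) choose s)) * B" .
  show ?thesis using mult_right_le_imp_le[OF X Bpos] unfolding E_def .
qed

lemma binom_partial_le: "(\<Sum>j\<le>M. real (n choose j)) \<le> 2 ^ n"
proof -
  have "(\<Sum>j\<le>M. real (n choose j)) \<le> (\<Sum>j\<le>max M n. real (n choose j))"
    by (intro sum_mono2) auto
  also have "\<dots> = (\<Sum>j\<le>n. real (n choose j))"
    by (rule sum.mono_neutral_right) (auto simp: binomial_eq_0)
  also have "\<dots> = 2 ^ n" using choose_row_sum[of n] by (metis of_nat_numeral of_nat_power of_nat_sum)
  finally show ?thesis .
qed

lemma even_partial_le: "(\<Sum>s\<le>S. real (n choose (2 * s))) \<le> 2 ^ n"
proof -
  have "(\<Sum>s\<le>S. real (n choose (2 * s))) = (\<Sum>j\<in>(\<lambda>s. 2 * s) ` {..S}. real (n choose j))"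
    by (subst sum.reindex) (auto simp: inj_on_def)
  also have "\<dots> \<le> (\<Sum>j\<le>2 * S. real (n choose j))"
    by (intro sum_mono2) auto
  also have "\<dots> \<le> 2 ^ n" by (rule binom_partial_le)
  finally show ?thesis .
qed

lemma half_sum: "2 ^ n \<le> 2 * (\<Sum>j\<le>n div 2. real (n choose j))"
proof -
  define h where "h = n div 2"
  have "2 ^ n = (\<Sum>j\<le>n. real (n choose j))"
    using choose_row_sum[of n] by (metis of_nat_numeral of_nat_power of_nat_sum)
  also have "{..n} = {..h} \<union> {h<..n}" by (auto simp: h_def)
  also have "(\<Sum>j\<in>{..h} \<union> {h<..n}. real (n choose j)) = (\<Sum>j\<le>h. real (n choose j)) + (\<Sum>j\<in>{h<..n}. real (n choose j))"
    by (rule sum.union_disjoint) auto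
  also have "(\<Sum>j\<in>{h<..n}. real (n choose j)) = (\<Sum>j\<in>{h<..n}. real (n choose (n - j)))"
    by (intro sum.cong refl) (simp add: binomial_symmetric[symmetric])
  also have "\<dots> = (\<Sum>i\<in>(\<lambda>j. n - j) ` {h<..n}. real (n choose i))"
    by (subst sum.reindex) (auto simp: inj_on_def)
  also have "\<dots> \<le> (\<Sum>i\<le>h. real (n choose i))"
    by (intro sum_mono2) (auto simp: h_def)
  finally show ?thesis by (simp add: h_def)
qed

lemma binom_ratio2:
  assumes "2 \<le> n" "j \<le> n div 2"
  shows "real (n choose j) \<le> 2 * real (n choose Suc j)"
proof -
  have st: "Suc j * (n choose Suc j) = (n - j) * (n choose j)" by (rule choose_step)
  have "Suc j \<le> 2 * (n - j)" using assms by linarith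
  hence "Suc j * (n choose j) \<le> 2 * (n - j) * (n choose j)" by (intro mult_right_mono) auto
  also have "\<dots> = Suc j * (2 * (n choose Suc j))" using st by (simp add: mult_ac)
  finally have "n choose j \<le> 2 * (n choose Suc j)" by (rule mult_left_le_imp_le) simp
  thus ?thesis by (metis of_nat_le_iff of_nat_mult of_nat_numeral)
qed

lemma sum_pairs: "(\<Sum>j<2 * Suc S. g j) = (\<Sum>s\<le>S. g (2 * s) + g (2 * s + 1))"
  for g :: "nat \<Rightarrow> real"
  by (induction S) (simp_all add: lessThan_Suc atMost_Suc numeral_2_eq_2)

lemma even_sum_big:
  assumes "2 \<le> n"
  shows "2 ^ n \<le> 6 * (\<Sum>s\<le>(n div 2 + 1) div 2. real (n choose (2 * s)))"
proof -
  define h where "h = n div 2"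
  define s1 where "s1 = (h + 1) div 2"
  define f where "f s = real (n choose (2 * s))" for s
  define g where "g j = (if j \<le> h then real (n choose j) else 0)" for j
  have "(\<Sum>j\<le>h. real (n choose j)) = (\<Sum>j<2 * Suc s1. g j)"
  proof -
    have "(\<Sum>j\<le>h. real (n choose j)) = (\<Sum>j\<le>h. g j)" by (simp add: g_def)
    also have "\<dots> = (\<Sum>j<2 * Suc s1. g j)"
      by (rule sum.mono_neutral_left) (auto simp: g_def s1_def)
    finally show ?thesis .
  qed
  also have "\<dots> = (\<Sum>s\<le>s1. g (2 * s) + g (2 * s + 1))" by (rule sum_pairs)
  also have "\<dots> \<le> (\<Sum>s\<le>s1. f s + (if s < s1 then 2 * f (Suc s) else 0))"
  proof (rule sum_mono)
    fix s assume "s \<in> {..s1}"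
    have a: "g (2 * s) \<le> f s" by (simp add: g_def f_def)
    have b: "g (2 * s + 1) \<le> (if s < s1 then 2 * f (Suc s) else 0)"
    proof (cases "2 * s + 1 \<le> h")
      case True
      hence "s < s1" by (simp add: s1_def)
      moreover have "real (n choose (2 * s + 1)) \<le> 2 * real (n choose Suc (2 * s + 1))"
        using True assms by (intro binom_ratio2) (auto simp: h_def)
      ultimately show ?thesis using True by (simp add: g_def f_def)
    next
      case False
      then show ?thesis by (auto simp: g_def f_def)
    qed
    from a b show "g (2 * s) + g (2 * s + 1) \<le> f s + (if s < s1 then 2 * f (Suc s) else 0)" by simp
  qed
  also have "\<dots> = (\<Sum>s\<le>s1. f s) + 2 * (\<Sum>s<s1. f (Suc s))"
  proof -
    have "(\<Sum>s\<le>s1. (if s < s1 then 2 * f (Suc s) else 0)) = (\<Sum>s<s1. 2 * f (Suc s))"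
      by (rule sum.mono_neutral_cong_right) auto
    thus ?thesis by (simp add: sum.distrib sum_distrib_left)
  qed
  also have "\<dots> \<le> 3 * (\<Sum>s\<le>s1. f s)"
  proof -
    have "(\<Sum>s<Suc s1. f s) = f 0 + (\<Sum>s<s1. f (Suc s))"
      by (rule sum.lessThan_Suc_shift)
    hence "(\<Sum>s\<le>s1. f s) = f 0 + (\<Sum>s<s1. f (Suc s))"
      by (simp only: lessThan_Suc_atMost)
    moreover have "0 \<le> f 0" by (simp add: f_def)
    ultimately show ?thesis by linarith
  qed
  finally have "(\<Sum>j\<le>h. real (n choose j)) \<le> 3 * (\<Sum>s\<le>s1. f s)" .
  with half_sum[of n] show ?thesis by (simp add: h_def s1_def f_def)
qed

lemma prefix_large:
  fixes n p mm S :: nat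
  assumes n: "n = 2 * p + mm" and n4: "4 \<le> n" and mmb: "16 * mm \<le> n"
  shows "exp (- 16 * (real mm)\<^sup>2 / real n) / 36 / sqrt (real n) * (\<Sum>s\<le>S. real (n choose (2 * s)))
         \<le> (\<Sum>s\<le>S. real ((p choose s) * ((p + mm) choose s)))"
proof -
  define E where "E = exp (- 16 * (real mm)\<^sup>2 / real n)"
  define l0 where "l0 = E / (6 * sqrt (real n))"
  define s1 where "s1 = (n div 2 + 1) div 2"
  define w where "w s = real ((p choose s) * ((p + mm) choose s))" for s
  define c where "c s = real (n choose (2 * s))" for s
  have npos: "0 < sqrt (real n)" using n4 by simp
  have E0: "0 \<le> E" by (simp add: E_def)
  have l00: "0 \<le> l0" using E0 npos by (simp add: l0_def)
  have pt: "l0 * c s \<le> w s" if "s \<le> s1" for s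
    using w_lower[OF n n4 mmb, of s] that by (simp add: l0_def E_def w_def c_def s1_def)
  have lam_le: "E / 36 / sqrt (real n) \<le> l0"
    using E0 npos by (simp add: l0_def field_simps)
  have c0: "0 \<le> (\<Sum>s\<le>S. c s)" by (simp add: c_def sum_nonneg)
  have w0: "0 \<le> w s" for s by (simp add: w_def)
  show ?thesis
  proof (cases "S \<le> s1")
    case True
    have "E / 36 / sqrt (real n) * (\<Sum>s\<le>S. c s) \<le> l0 * (\<Sum>s\<le>S. c s)"
      using lam_le c0 by (rule mult_right_mono)
    also have "\<dots> = (\<Sum>s\<le>S. l0 * c s)" by (simp add: sum_distrib_left)
    also have "\<dots> \<le> (\<Sum>s\<le>S. w s)" using True by (intro sum_mono pt) auto
    finally show ?thesis by (simp add: E_def w_def c_def)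
  next
    case False
    have "E / 36 / sqrt (real n) * (\<Sum>s\<le>S. c s) \<le> E / 36 / sqrt (real n) * 2 ^ n"
      using E0 npos even_partial_le[where S=S and n=n] by (intro mult_left_mono) (auto simp: c_def)
    also have "\<dots> = l0 * (2 ^ n / 6)" using npos by (simp add: l0_def field_simps)
    also have "\<dots> \<le> l0 * (\<Sum>s\<le>s1. c s)"
      using even_sum_big[of n] n4 l00 by (intro mult_left_mono) (auto simp: c_def s1_def)
    also have "\<dots> = (\<Sum>s\<le>s1. l0 * c s)" by (simp add: sum_distrib_left)
    also have "\<dots> \<le> (\<Sum>s\<le>s1. w s)" by (intro sum_mono pt) auto
    also have "\<dots> \<le> (\<Sum>s\<le>S. w s)" using False w0 by (intro sum_mono2) auto
    finally show ?thesis by (simp add: E_def w_def c_def)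
  qed
qed

lemma prefix_small:
  fixes n p mm S :: nat
  shows "1 / 2 ^ n * (\<Sum>s\<le>S. real (n choose (2 * s))) \<le> (\<Sum>s\<le>S. real ((p choose s) * ((p + mm) choose s)))"
proof -
  have "1 / 2 ^ n * (\<Sum>s\<le>S. real (n choose (2 * s))) \<le> 1 / 2 ^ n * 2 ^ n"
    using even_partial_le[where S=S and n=n] by (intro mult_left_mono) auto
  also have "\<dots> = real ((p choose 0) * ((p + mm) choose 0))" by simp
  also have "\<dots> \<le> (\<Sum>s\<le>S. real ((p choose s) * ((p + mm) choose s)))"
    by (rule member_le_sum) auto
  finally show ?thesis .
qed

theorem mainTheorem4:
  fixes C :: real
  assumes "C > 0"
  shows "\<exists>c>0. \<forall>(n::nat) (m::int) (k::nat).
           n \<ge> 1 \<longrightarrow> \<bar>m\<bar> \<le> int n \<longrightarrow> even (int n - \<bar>m\<bar>) \<longrightarrow>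
           real_of_int \<bar>m\<bar> \<le> C * sqrt (real n) \<longrightarrow> k \<ge> 1 \<longrightarrow>
           (SUP r\<in>{0..1::real}. \<bar>(deriv ^^ k) (zernikeR n (nat \<bar>m\<bar>)) r\<bar>)
             \<ge> c / sqrt (real n) *
               ((\<Prod>j<k. (real n)\<^sup>2 - (real j)\<^sup>2) / (2 ^ k * pochhammer (1/2) k))"
proof -
  define N1 where "N1 = nat \<lceil>max 4 (256 * C\<^sup>2)\<rceil>"
  define \<kappa> where "\<kappa> = min (exp (- 16 * C\<^sup>2) / 36) (1 / 2 ^ N1)"
  have kpos: "0 < \<kappa>" by (simp add: \<kappa>_def)
  have N1ge: "max 4 (256 * C\<^sup>2) \<le> real N1" unfolding N1_def by (rule real_nat_ceiling_ge)
  show ?thesis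
  proof (intro exI[of _ \<kappa>] conjI allI impI)
    show "0 < \<kappa>" by (rule kpos)
    fix n :: nat and m :: int and k :: nat
    assume n1: "n \<ge> 1" and mn: "\<bar>m\<bar> \<le> int n" and ev: "even (int n - \<bar>m\<bar>)"
      and mC: "real_of_int \<bar>m\<bar> \<le> C * sqrt (real n)" and k1: "k \<ge> 1"
    define mm where "mm = nat \<bar>m\<bar>"
    have mmr: "real mm = real_of_int \<bar>m\<bar>" by (simp add: mm_def)
    have mm_le: "mm \<le> n" using mn by (simp add: mm_def)
    have "int (n - mm) = int n - \<bar>m\<bar>" using mm_le by (simp add: mm_def of_nat_diff)
    hence evn: "even (n - mm)" using ev by (metis even_of_nat)
    define p where "p = (n - mm) div 2"
    have n_eq: "n = 2 * p + mm" using evn mm_le by (simp add: p_def)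
    define lam where "lam = \<kappa> / sqrt (real n)"
    have sqn: "1 \<le> sqrt (real n)" using n1 by simp
    have pref: "lam * (\<Sum>s\<le>S. real (n choose (2 * s))) \<le> (\<Sum>s\<le>S. real ((p choose s) * ((p + mm) choose s)))"
      if "S \<le> n div 2" for S
    proof -
      have c0: "0 \<le> (\<Sum>s\<le>S. real (n choose (2 * s)))" by (simp add: sum_nonneg)
      show ?thesis
      proof (cases "n < N1")
        case True
        have "lam \<le> \<kappa>" using sqn kpos by (simp add: lam_def divide_le_eq mult_le_cancel_left1 less_imp_le)
        also have "\<dots> \<le> 1 / 2 ^ N1" by (simp add: \<kappa>_def)
        also have "\<dots> \<le> 1 / 2 ^ n" using True by (simp add: frac_le power_increasing)
        finally have "lam * (\<Sum>s\<le>S. real (n choose (2 * s))) \<le> 1 / 2 ^ n * (\<Sum>s\<le>S. real (n choose (2 * s)))"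
          using c0 by (rule mult_right_mono)
        also have "\<dots> \<le> (\<Sum>s\<le>S. real ((p choose s) * ((p + mm) choose s)))" by (rule prefix_small)
        finally show ?thesis .
      next
        case False
        hence nge: "max 4 (256 * C\<^sup>2) \<le> real n" using N1ge by linarith
        have n4: "4 \<le> n" using nge by simp
        have "(16 * C)\<^sup>2 \<le> real n" using nge by (simp add: power2_eq_square)
        hence s16: "16 * C \<le> sqrt (real n)" using assms real_le_rsqrt by blast
        have "16 * real mm \<le> 16 * (C * sqrt (real n))" using mC mmr by simp
        also have "\<dots> = (16 * C) * sqrt (real n)" by simp
        also have "\<dots> \<le> sqrt (real n) * sqrt (real n)" using s16 by (intro mult_right_mono) auto
        also have "\<dots> = real n" by simp
        finally have "real (16 * mm) \<le> real n" by simp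
        hence mmb: "16 * mm \<le> n" by linarith
        have "(real mm)\<^sup>2 \<le> (C * sqrt (real n))\<^sup>2" using mC mmr by (intro power_mono) auto
        hence "(real mm)\<^sup>2 \<le> C\<^sup>2 * real n" by (simp add: power_mult_distrib)
        hence "16 * (real mm)\<^sup>2 / real n \<le> 16 * C\<^sup>2" using n1 by (simp add: divide_le_eq mult_ac)
        hence "- 16 * C\<^sup>2 \<le> - 16 * (real mm)\<^sup>2 / real n" by simp
        hence "exp (- 16 * C\<^sup>2) \<le> exp (- 16 * (real mm)\<^sup>2 / real n)" by (subst exp_le_cancel_iff)
        moreover have "\<kappa> \<le> exp (- 16 * C\<^sup>2) / 36" by (simp add: \<kappa>_def)
        ultimately have "\<kappa> \<le> exp (- 16 * (real mm)\<^sup>2 / real n) / 36" by linarith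
        hence "lam \<le> exp (- 16 * (real mm)\<^sup>2 / real n) / 36 / sqrt (real n)"
          unfolding lam_def by (rule divide_right_mono) (use sqn in auto)
        hence "lam * (\<Sum>s\<le>S. real (n choose (2 * s))) \<le> exp (- 16 * (real mm)\<^sup>2 / real n) / 36 / sqrt (real n) * (\<Sum>s\<le>S. real (n choose (2 * s)))"
          using c0 by (rule mult_right_mono)
        also have "\<dots> \<le> (\<Sum>s\<le>S. real ((p choose s) * ((p + mm) choose s)))"
          by (rule prefix_large[OF n_eq n4 mmb])
        finally show ?thesis .
      qed
    qed
    have red: "lam * coeff (fst (cheb n)) k \<le> coeff (RP n p mm) k"
      by (rule reduce[OF n_eq pref])
    have fz: "zernikeR n mm = (\<lambda>r. poly (RP n p mm) (r - 1))"
      by (rule ext, rule zern_poly[OF n_eq])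
    have val: "(deriv ^^ k) (zernikeR n mm) 1 = fact k * coeff (RP n p mm) k"
      unfolding fz by (rule taylor_at)
    have fz2: "zernikeR n mm = poly (pcompose (RP n p mm) [:-1, 1:])"
      unfolding fz by (auto simp: poly_pcompose)
    have bdd: "bdd_above ((\<lambda>r. \<bar>(deriv ^^ k) (zernikeR n mm) r\<bar>) ` {0..1})"
    proof -
      have "continuous_on {0..1::real} (\<lambda>r. \<bar>(deriv ^^ k) (zernikeR n mm) r\<bar>)"
        unfolding fz2 higher_deriv_poly by (intro continuous_intros)
      hence "compact ((\<lambda>r. \<bar>(deriv ^^ k) (zernikeR n mm) r\<bar>) ` {0..1})"
        by (rule compact_continuous_image[OF _ compact_Icc])
      thus ?thesis by (intro bounded_imp_bdd_above compact_imp_bounded)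
    qed
    have poch: "0 < pochhammer (1/2::real) k" by (rule pochhammer_pos) simp
    have prodeq: "(\<Prod>j<k. (real n)\<^sup>2 - (real j)\<^sup>2) / (2 ^ k * pochhammer (1/2) k) = fact k * coeff (fst (cheb n)) k"
      using cheb_closed[of k n] poch by (simp add: field_simps)
    have "\<kappa> / sqrt (real n) * ((\<Prod>j<k. (real n)\<^sup>2 - (real j)\<^sup>2) / (2 ^ k * pochhammer (1/2) k))
        = fact k * (lam * coeff (fst (cheb n)) k)" unfolding prodeq lam_def by simp
    also have "\<dots> \<le> fact k * coeff (RP n p mm) k" using red by (intro mult_left_mono) auto
    also have "\<dots> = (deriv ^^ k) (zernikeR n mm) 1" by (rule val[symmetric])
    also have "\<dots> \<le> \<bar>(deriv ^^ k) (zernikeR n mm) 1\<bar>" by simp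
    also have "\<dots> \<le> (SUP r\<in>{0..1::real}. \<bar>(deriv ^^ k) (zernikeR n mm) r\<bar>)"
      by (rule cSUP_upper[OF _ bdd]) simp
    finally show "\<kappa> / sqrt (real n) * ((\<Prod>j<k. (real n)\<^sup>2 - (real j)\<^sup>2) / (2 ^ k * pochhammer (1/2) k))
        \<le> (SUP r\<in>{0..1::real}. \<bar>(deriv ^^ k) (zernikeR n (nat \<bar>m\<bar>)) r\<bar>)"
      by (simp add: mm_def)
  qed
qed

end
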